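(* Let $r\ge 2$ and $n\ge 1$, and let $G=K_{n,n,\dots,n}$ be the complete $r$-partite graph with $r$ parts of size $n$. Let $\mathcal{E}$ be the set of $r$-element subsets of $V(G)$ containing exactly one vertex from each part (so $|\mathcal{E}|=n^r$). Choose elements of $\mathcal{E}$ one at a time in a uniformly random order (without repetition), stopping as soon as every vertex of $G$ lies in at least one chosen element; let $G_\omega$ be the resulting $r$-uniform hypergraph on $V(G)$. Then the expected number of matchings in $G_\omega$ is $$(n!)^{r-1}\sum_{i=1}^r (-1)^{i-1}\frac{\binom{r}{i}}{\binom{n^r-(n-1)^i n^{r-i}+n-1}{n}}.$$
   Context: A matching in an $r$-uniform hypergraph on vertex set $V$ is a set $M$ of its edges such that every vertex of $V$ lies in exactly one edge of $M$. *)

theory Defs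
  imports "HOL-Combinatorics.Multiset_Permutations" Complex_Main
begin

definition kpart_vertices :: "nat \<Rightarrow> nat \<Rightarrow> (nat \<times> nat) set" where
  "kpart_vertices r n = {(j, v). j < r \<and> v < n}"

definition transversal_edges :: "nat \<Rightarrow> nat \<Rightarrow> (nat \<times> nat) set set" where
  "transversal_edges r n =
     {e. e \<subseteq> kpart_vertices r n \<and> card e = r \<and> (\<forall>j<r. card {v. (j, v) \<in> e} = 1)}"

definition stop_index :: "'a set \<Rightarrow> 'a set list \<Rightarrow> nat" where
  "stop_index V xs = (LEAST k. V \<subseteq> \<Union> (set (take k xs)))"

definition G_omega :: "'a set \<Rightarrow> 'a set list \<Rightarrow> 'a set set" where
  "G_omega V xs = set (take (stop_index V xs) xs)"

definition is_matching :: "'a set \<Rightarrow> 'a set set \<Rightarrow> 'a set set \<Rightarrow> bool" where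
  "is_matching V H M \<longleftrightarrow> M \<subseteq> H \<and> (\<forall>v\<in>V. \<exists>!e. e \<in> M \<and> v \<in> e)"

definition matchings :: "'a set \<Rightarrow> 'a set set \<Rightarrow> 'a set set set" where
  "matchings V H = {M. is_matching V H M}"

end

theory Submission
  imports Defs "HOL-Combinatorics.Permutations"
begin

lemma count_insert:
  assumes "finite A" "a \<notin> A"
  shows "card {xs \<in> permutations_of_set (insert a A). R (removeAll a xs)}
         = Suc (card A) * card {ys \<in> permutations_of_set A. R ys}"
proof -
  let ?f = "\<lambda>(ys, k). take k ys @ a # drop k ys"
  let ?D = "{ys \<in> permutations_of_set A. R ys} \<times> {0..card A}"
  have img: "{xs \<in> permutations_of_set (insert a A). R (removeAll a xs)} = ?f ` ?D"
  proof (rule set_eqI, rule iffI)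
    fix xs assume "xs \<in> {xs \<in> permutations_of_set (insert a A). R (removeAll a xs)}"
    then have xs: "set xs = insert a A" "distinct xs" "R (removeAll a xs)"
      by (auto simp: permutations_of_set_def)
    then have "a \<in> set xs" by auto
    then obtain p q where pq: "xs = p @ a # q" by (meson split_list)
    with xs have ap: "a \<notin> set p" "a \<notin> set q" by auto
    have rem: "removeAll a xs = p @ q" using pq ap by simp
    have "set (p @ q) = A" using xs pq ap assms(2) by auto
    moreover have "distinct (p @ q)" using xs pq by auto
    ultimately have "p @ q \<in> permutations_of_set A" by auto
    moreover have "length p \<le> card A"
      using \<open>set (p @ q) = A\<close> \<open>distinct (p @ q)\<close> distinct_card by fastforce
    moreover have "?f (p @ q, length p) = xs" using pq by simp
    ultimately show "xs \<in> ?f ` ?D" using xs(3) rem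
      by (intro image_eqI[of _ _ "(p @ q, length p)"]) auto
  next
    fix xs assume "xs \<in> ?f ` ?D"
    then obtain ys k where yk: "ys \<in> permutations_of_set A" "R ys" "k \<le> card A"
      and xs: "xs = take k ys @ a # drop k ys" by auto
    have ys: "set ys = A" "distinct ys" using yk(1) by (auto simp: permutations_of_set_def)
    have na: "a \<notin> set (take k ys)" "a \<notin> set (drop k ys)"
      using ys assms(2) by (meson in_set_takeD in_set_dropD)+
    have "removeAll a xs = ys" using xs na
      by (simp add: removeAll_id)
    moreover have "set xs = insert a A"
    proof -
      have "set xs = insert a (set (take k ys) \<union> set (drop k ys))" using xs by auto
      moreover have "set (take k ys) \<union> set (drop k ys) = set ys"
        by (metis append_take_drop_id set_append)
      ultimately show ?thesis using ys by simp
    qed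
    moreover have "distinct xs"
    proof -
      have "set (take k ys) \<inter> set (drop k ys) = {}" "distinct (take k ys)" "distinct (drop k ys)"
      proof -
        have "distinct (take k ys @ drop k ys)" using ys(2) by simp
        then show "set (take k ys) \<inter> set (drop k ys) = {}" "distinct (take k ys)" "distinct (drop k ys)"
          by (simp_all only: distinct_append)
      qed
      then show ?thesis unfolding xs using na by (simp add: disjoint_iff)
    qed
    ultimately show "xs \<in> {xs \<in> permutations_of_set (insert a A). R (removeAll a xs)}"
      using yk by auto
  qed
  have inj: "inj_on ?f ?D"
  proof (rule inj_onI, clarify)
    fix ys k ys' k'
    assume a1: "ys \<in> permutations_of_set A" "k \<in> {0..card A}"
       and a2: "ys' \<in> permutations_of_set A" "k' \<in> {0..card A}"
       and eq: "take k ys @ a # drop k ys = take k' ys' @ a # drop k' ys'"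
    have ys: "set ys = A" "length ys = card A" using a1(1)
      by (auto simp: permutations_of_set_def length_finite_permutations_of_set)
    have ys': "set ys' = A" "length ys' = card A" using a2(1)
      by (auto simp: permutations_of_set_def length_finite_permutations_of_set)
    have na: "a \<notin> set (take k ys)" "a \<notin> set (drop k ys)"
      using ys assms(2) by (meson in_set_takeD in_set_dropD)+
    have na': "a \<notin> set (take k' ys')" "a \<notin> set (drop k' ys')"
      using ys' assms(2) by (meson in_set_takeD in_set_dropD)+
    have "take k ys = take k' ys'" "drop k ys = drop k' ys'"
      using eq na by (simp_all add: append_Cons_eq_iff)
    then have "ys = ys'" by (metis append_take_drop_id)
    moreover have L: "length (take k ys) = length (take k' ys')"
      using \<open>take k ys = take k' ys'\<close> by (rule arg_cong)
    have "k = k'" using L a1(2) a2(2) ys(2) ys'(2) by simp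
    show "ys = ys' \<and> k = k'" using \<open>ys = ys'\<close> \<open>k = k'\<close> by simp
  qed
  have "card (?f ` ?D) = card ?D" using inj by (rule card_image)
  also have "\<dots> = card {ys \<in> permutations_of_set A. R ys} * Suc (card A)"
    by (simp add: card_cartesian_product)
  finally show ?thesis using img by simp
qed

lemma count_filter:
  assumes "finite F" "F \<inter> D = {}" "finite D"
  shows "card {xs \<in> permutations_of_set (D \<union> F). filter (\<lambda>x. x \<in> D) xs \<in> P} * fact (card D)
         = fact (card D + card F) * card (P \<inter> permutations_of_set D)"
  using assms
proof (induction F rule: finite_induct)
  case empty
  have "{xs \<in> permutations_of_set D. filter (\<lambda>x. x \<in> D) xs \<in> P} = P \<inter> permutations_of_set D"
    by (auto simp: permutations_of_set_def)
  then show ?case by simp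
next
  case (insert a F)
  have aD: "a \<notin> D \<union> F" using insert by auto
  have fin: "finite (D \<union> F)" using insert by auto
  have eq: "D \<union> insert a F = insert a (D \<union> F)" by auto
  have filt: "filter (\<lambda>x. x \<in> D) xs = filter (\<lambda>x. x \<in> D) (removeAll a xs)" for xs
    using insert(4) aD by (induction xs) auto
  have "card {xs \<in> permutations_of_set (D \<union> insert a F). filter (\<lambda>x. x \<in> D) xs \<in> P}
     = card {xs \<in> permutations_of_set (insert a (D \<union> F)). filter (\<lambda>x. x \<in> D) (removeAll a xs) \<in> P}"
    unfolding eq using filt by metis
  also have "\<dots> = Suc (card (D \<union> F)) * card {ys \<in> permutations_of_set (D \<union> F). filter (\<lambda>x. x \<in> D) ys \<in> P}"
    by (rule count_insert[OF fin aD])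
  finally have 1: "card {xs \<in> permutations_of_set (D \<union> insert a F). filter (\<lambda>x. x \<in> D) xs \<in> P}
     = Suc (card (D \<union> F)) * card {ys \<in> permutations_of_set (D \<union> F). filter (\<lambda>x. x \<in> D) ys \<in> P}" .
  have cdf: "card (D \<union> F) = card D + card F"
    using insert by (simp add: card_Un_disjoint inf_commute)
  have IH: "card {xs \<in> permutations_of_set (D \<union> F). filter (\<lambda>x. x \<in> D) xs \<in> P} * fact (card D)
         = fact (card D + card F) * card (P \<inter> permutations_of_set D)"
    using insert by auto
  have cF: "card (insert a F) = Suc (card F)" using insert(1,2) by simp
  have "card {xs \<in> permutations_of_set (D \<union> insert a F). filter (\<lambda>x. x \<in> D) xs \<in> P} * fact (card D)
     = Suc (card D + card F) * (card {ys \<in> permutations_of_set (D \<union> F). filter (\<lambda>x. x \<in> D) ys \<in> P} * fact (card D))"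
    unfolding 1 cdf by (simp only: mult.assoc)
  also have "\<dots> = Suc (card D + card F) * (fact (card D + card F) * card (P \<inter> permutations_of_set D))"
    unfolding IH ..
  also have "\<dots> = fact (card D + card (insert a F)) * card (P \<inter> permutations_of_set D)"
    unfolding cF by (simp only: add_Suc_right fact_Suc mult.assoc of_nat_id)
  finally show ?case .
qed

lemma count_pattern:
  assumes "finite D" "e \<in> D" "B \<subseteq> D" "e \<notin> B"
  shows "card {zs \<in> permutations_of_set D. \<exists>b c. zs = b @ e # c \<and> set b = B}
         = fact (card B) * fact (card D - card B - 1)"
proof -
  let ?f = "\<lambda>(b, c). b @ e # c"
  let ?C = "D - insert e B"
  have img: "{zs \<in> permutations_of_set D. \<exists>b c. zs = b @ e # c \<and> set b = B}
        = ?f ` (permutations_of_set B \<times> permutations_of_set ?C)"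
  proof (rule set_eqI, rule iffI)
    fix zs assume "zs \<in> {zs \<in> permutations_of_set D. \<exists>b c. zs = b @ e # c \<and> set b = B}"
    then obtain b c where zs: "set zs = D" "distinct zs" "zs = b @ e # c" "set b = B"
      by (auto simp: permutations_of_set_def)
    have "b \<in> permutations_of_set B" using zs by (auto simp: permutations_of_set_def)
    moreover have "c \<in> permutations_of_set ?C" using zs by (auto simp: permutations_of_set_def)
    ultimately show "zs \<in> ?f ` (permutations_of_set B \<times> permutations_of_set ?C)"
      using zs by (intro image_eqI[of _ _ "(b, c)"]) auto
  next
    fix zs assume "zs \<in> ?f ` (permutations_of_set B \<times> permutations_of_set ?C)"
    then obtain b c where bc: "b \<in> permutations_of_set B" "c \<in> permutations_of_set ?C" "zs = b @ e # c"
      by auto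
    then show "zs \<in> {zs \<in> permutations_of_set D. \<exists>b c. zs = b @ e # c \<and> set b = B}"
      using assms by (auto simp: permutations_of_set_def)
  qed
  have inj: "inj_on ?f (permutations_of_set B \<times> permutations_of_set ?C)"
  proof (rule inj_onI, clarify)
    fix b c b' c'
    assume "b \<in> permutations_of_set B" "c \<in> permutations_of_set ?C" "b @ e # c = b' @ e # c'"
    then show "b = b' \<and> c = c'" using assms(4)
      by (subst (asm) append_Cons_eq_iff) (auto simp: permutations_of_set_def)
  qed
  have fB: "finite B" "finite ?C" using assms finite_subset by auto
  have cC: "card ?C = card D - card B - 1"
    using assms fB by (subst card_Diff_subset) auto
  show ?thesis
    unfolding img card_image[OF inj] card_cartesian_product using fB cC by simp
qed

lemma decomp:
  assumes "xs \<in> permutations_of_set E" "M \<subseteq> E" "M \<noteq> {}"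
  shows "\<exists>e p q. xs = p @ e # q \<and> e \<in> M \<and> M - {e} \<subseteq> set p"
proof -
  have sx: "set xs = E" "distinct xs" using assms(1) by (auto simp: permutations_of_set_def)
  have "\<exists>x\<in>set xs. x \<in> M" using assms(2,3) sx by auto
  then obtain p e q where pq: "xs = p @ e # q" "e \<in> M" "\<forall>z\<in>set q. z \<notin> M"
    using split_list_last_prop[of xs "\<lambda>x. x \<in> M"] by blast
  have "M - {e} \<subseteq> set p"
  proof
    fix m assume "m \<in> M - {e}"
    then have "m \<in> set xs" "m \<noteq> e" "m \<notin> set q" using assms(2) sx pq by auto
    then show "m \<in> set p" using pq by auto
  qed
  then show ?thesis using pq by blast
qed

lemma decomp_unique:
  assumes "distinct xs"
    and 1: "xs = p @ e # q" "M - {e} \<subseteq> set p" "e \<in> M"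
    and 2: "xs = p' @ e' # q'" "M - {e'} \<subseteq> set p'" "e' \<in> M"
  shows "e = e'"
proof (rule ccontr)
  assume ne: "e \<noteq> e'"
  then have "e' \<in> set p" using 1 2 by auto
  then obtain p1 p2 where p: "p = p1 @ e' # p2" by (meson split_list)
  have xs: "xs = p1 @ e' # (p2 @ e # q)" using 1 p by simp
  have "e' \<notin> set p1" "e' \<notin> set (p2 @ e # q)" using assms(1) xs by auto
  then have "p1 = p'" using xs 2(1) append_Cons_eq_iff by metis
  moreover have "e \<in> set p'" using ne 1 2 by auto
  ultimately have "e \<in> set p" using p by auto
  moreover have "e \<notin> set p" using assms(1) 1 by auto
  ultimately show False by simp
qed

lemma union_take_mono:
  "i \<le> j \<Longrightarrow> \<Union> (set (take i xs)) \<subseteq> \<Union> (set (take j xs))"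
  by (rule Union_mono, rule set_take_subset_set_take)

lemma charac:
  assumes xsE: "xs \<in> permutations_of_set E"
    and EV: "\<forall>f\<in>E. f \<subseteq> V" and ME: "M \<subseteq> E"
    and match: "\<forall>v\<in>V. \<exists>!e. e \<in> M \<and> v \<in> e"
    and pq: "xs = p @ e # q" "e \<in> M" "M - {e} \<subseteq> set p"
  shows "M \<subseteq> G_omega V xs \<longleftrightarrow> (\<exists>v\<in>e. \<forall>f\<in>set p. v \<notin> f)"
proof -
  have sx: "set xs = E" "distinct xs" using xsE by (auto simp: permutations_of_set_def)
  have ep: "e \<notin> set p" using sx pq by auto
  define k where "k = length p"
  define \<tau> where "\<tau> = stop_index V xs"
  have tk1: "take (Suc k) xs = p @ [e]" using pq k_def by simp
  have tk: "take k xs = p" using pq k_def by simp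
  have cov: "V \<subseteq> \<Union> (set (take (Suc k) xs))"
  proof
    fix v assume "v \<in> V"
    then obtain e' where "e' \<in> M" "v \<in> e'" using match by blast
    then have "e' \<in> set p \<union> {e}" using pq(3) by blast
    then show "v \<in> \<Union> (set (take (Suc k) xs))" unfolding tk1 using \<open>v \<in> e'\<close> by auto
  qed
  have tle: "\<tau> \<le> Suc k" unfolding \<tau>_def stop_index_def using cov by (rule Least_le)
  have tprop: "V \<subseteq> \<Union> (set (take \<tau> xs))" unfolding \<tau>_def stop_index_def using cov by (rule LeastI)
  have G: "G_omega V xs = set (take \<tau> xs)" unfolding G_omega_def \<tau>_def ..
  have 1: "M \<subseteq> G_omega V xs \<longleftrightarrow> \<tau> = Suc k"
  proof
    assume "M \<subseteq> G_omega V xs"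
    then have "e \<in> set (take \<tau> xs)" using G pq by auto
    show "\<tau> = Suc k"
    proof (rule ccontr)
      assume "\<tau> \<noteq> Suc k"
      then have "\<tau> \<le> k" using tle by simp
      then have "set (take \<tau> xs) \<subseteq> set (take k xs)" by (rule set_take_subset_set_take)
      then show False using \<open>e \<in> set (take \<tau> xs)\<close> tk ep by auto
    qed
  next
    assume "\<tau> = Suc k"
    then have "G_omega V xs = set p \<union> {e}" using G tk1 by simp
    then show "M \<subseteq> G_omega V xs" using pq(2,3) by blast
  qed
  have 2: "\<tau> = Suc k \<longleftrightarrow> \<not> V \<subseteq> \<Union> (set p)"
  proof
    assume t: "\<tau> = Suc k"
    show "\<not> V \<subseteq> \<Union> (set p)"
    proof
      assume "V \<subseteq> \<Union> (set p)"
      then have "V \<subseteq> \<Union> (set (take k xs))" using tk by simp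
      then have "\<tau> \<le> k" unfolding \<tau>_def stop_index_def by (rule Least_le)
      then show False using t by simp
    qed
  next
    assume nc: "\<not> V \<subseteq> \<Union> (set p)"
    show "\<tau> = Suc k"
    proof (rule ccontr)
      assume "\<tau> \<noteq> Suc k"
      then have "\<tau> \<le> k" using tle by simp
      then have "V \<subseteq> \<Union> (set (take k xs))" using subset_trans[OF tprop union_take_mono[of \<tau> k xs]] by simp
      then show False using nc tk by simp
    qed
  qed
  have eV: "e \<subseteq> V" using EV ME pq by auto
  have 3: "\<not> V \<subseteq> \<Union> (set p) \<longleftrightarrow> (\<exists>v\<in>e. \<forall>f\<in>set p. v \<notin> f)"
  proof
    assume "\<not> V \<subseteq> \<Union> (set p)"
    then obtain v where v: "v \<in> V" "\<forall>f\<in>set p. v \<notin> f" by blast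
    then obtain e' where e': "e' \<in> M" "v \<in> e'" using match by blast
    have "e' = e"
    proof (rule ccontr)
      assume "e' \<noteq> e"
      then have "e' \<in> set p" using e'(1) pq(3) by blast
      then show False using v(2) e'(2) by blast
    qed
    then show "\<exists>v\<in>e. \<forall>f\<in>set p. v \<notin> f" using e' v by blast
  next
    assume "\<exists>v\<in>e. \<forall>f\<in>set p. v \<notin> f"
    then show "\<not> V \<subseteq> \<Union> (set p)" using eV by blast
  qed
  show ?thesis using 1 2 3 by simp
qed

definition Ev :: "'a set set \<Rightarrow> 'a set set \<Rightarrow> 'a set \<Rightarrow> 'a set list set" where
  "Ev E M e = {xs \<in> permutations_of_set E. \<exists>p q. xs = p @ e # q \<and> M - {e} \<subseteq> set p \<and>
                 (\<exists>v\<in>e. \<forall>f\<in>set p. v \<notin> f)}"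

definition Av :: "'a set set \<Rightarrow> 'a set set \<Rightarrow> 'a set \<Rightarrow> 'a \<Rightarrow> 'a set list set" where
  "Av E M e v = {xs \<in> permutations_of_set E. \<exists>p q. xs = p @ e # q \<and> M - {e} \<subseteq> set p \<and>
                 (\<forall>f\<in>set p. v \<notin> f)}"

lemma card_success:
  assumes finE: "finite E"
    and EV: "\<forall>f\<in>E. f \<subseteq> V" and ME: "M \<subseteq> E" and Mne: "M \<noteq> {}"
    and match: "\<forall>v\<in>V. \<exists>!e. e \<in> M \<and> v \<in> e"
  shows "card {xs \<in> permutations_of_set E. M \<subseteq> G_omega V xs} = (\<Sum>e\<in>M. card (Ev E M e))"
proof -
  have eq: "{xs \<in> permutations_of_set E. M \<subseteq> G_omega V xs} = (\<Union>e\<in>M. Ev E M e)"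
  proof (rule set_eqI, rule iffI)
    fix xs assume a: "xs \<in> {xs \<in> permutations_of_set E. M \<subseteq> G_omega V xs}"
    then have xsE: "xs \<in> permutations_of_set E" by simp
    obtain e p q where pq: "xs = p @ e # q" "e \<in> M" "M - {e} \<subseteq> set p"
      using decomp[OF xsE ME Mne] by blast
    have "\<exists>v\<in>e. \<forall>f\<in>set p. v \<notin> f" using charac[OF xsE EV ME match pq] a by simp
    then have "xs \<in> Ev E M e" unfolding Ev_def using pq(1,3) xsE by auto
    then show "xs \<in> (\<Union>e\<in>M. Ev E M e)" using pq(2) by blast
  next
    fix xs assume "xs \<in> (\<Union>e\<in>M. Ev E M e)"
    then obtain e where e: "e \<in> M" "xs \<in> Ev E M e" by blast
    then obtain p q where xsE: "xs \<in> permutations_of_set E" and pq: "xs = p @ e # q" "e \<in> M" "M - {e} \<subseteq> set p"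
      and v: "\<exists>v\<in>e. \<forall>f\<in>set p. v \<notin> f"
      unfolding Ev_def by auto
    show "xs \<in> {xs \<in> permutations_of_set E. M \<subseteq> G_omega V xs}"
      using charac[OF xsE EV ME match pq] v xsE by simp
  qed
  have fM: "finite M" using finE ME finite_subset by auto
  have fEv: "\<forall>e\<in>M. finite (Ev E M e)"
    unfolding Ev_def by (auto intro: finite_subset[OF _ finite_permutations_of_set])
  have disj: "\<forall>e\<in>M. \<forall>e'\<in>M. e \<noteq> e' \<longrightarrow> Ev E M e \<inter> Ev E M e' = {}"
  proof (intro ballI impI)
    fix e e' assume ee: "e \<in> M" "e' \<in> M" "e \<noteq> e'"
    show "Ev E M e \<inter> Ev E M e' = {}"
    proof (rule ccontr)
      assume "Ev E M e \<inter> Ev E M e' \<noteq> {}"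
      then obtain xs where xs: "xs \<in> Ev E M e" "xs \<in> Ev E M e'" by blast
      then obtain p q where xsE: "xs \<in> permutations_of_set E"
        and 1: "xs = p @ e # q" "M - {e} \<subseteq> set p" unfolding Ev_def by auto
      obtain p' q' where 2: "xs = p' @ e' # q'" "M - {e'} \<subseteq> set p'"
        using xs(2) unfolding Ev_def by auto
      have "distinct xs" using xsE by (simp add: permutations_of_set_def)
      from decomp_unique[OF this 1 \<open>e \<in> M\<close> 2 \<open>e' \<in> M\<close>] show False using ee by simp
    qed
  qed
  show ?thesis unfolding eq by (rule card_UN_disjoint[OF fM fEv disj])
qed

lemma Ev_Un: "Ev E M e = (\<Union>v\<in>e. Av E M e v)"
  unfolding Ev_def Av_def by blast

lemma Av_Inter:
  assumes "S \<noteq> {}"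
  shows "(\<Inter>v\<in>S. Av E M e v) = {xs \<in> permutations_of_set E. \<exists>p q. xs = p @ e # q \<and> M - {e} \<subseteq> set p \<and>
                 (\<forall>v\<in>S. \<forall>f\<in>set p. v \<notin> f)}"
proof (rule set_eqI, rule iffI)
  fix xs assume a: "xs \<in> (\<Inter>v\<in>S. Av E M e v)"
  obtain v0 where v0: "v0 \<in> S" using assms by blast
  have "xs \<in> Av E M e v0" using a v0 by blast
  then obtain p q where xsE: "xs \<in> permutations_of_set E" and pq: "xs = p @ e # q" "M - {e} \<subseteq> set p"
    unfolding Av_def by auto
  have nep: "e \<notin> set p" "e \<notin> set q" using xsE pq by (auto simp: permutations_of_set_def)
  have all: "\<forall>v\<in>S. \<forall>f\<in>set p. v \<notin> f"
  proof (intro ballI)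
    fix v f assume vf: "v \<in> S" "f \<in> set p"
    have "xs \<in> Av E M e v" using a vf(1) by blast
    then obtain p' q' where pq': "xs = p' @ e # q'" "\<forall>f\<in>set p'. v \<notin> f" unfolding Av_def by auto
    have "p = p'" using pq(1) nep pq'(1) append_Cons_eq_iff by metis
    then show "v \<notin> f" using vf(2) pq'(2) by simp
  qed
  show "xs \<in> {xs \<in> permutations_of_set E. \<exists>p q. xs = p @ e # q \<and> M - {e} \<subseteq> set p \<and>
                 (\<forall>v\<in>S. \<forall>f\<in>set p. v \<notin> f)}"
    using xsE pq all by auto
next
  fix xs assume "xs \<in> {xs \<in> permutations_of_set E. \<exists>p q. xs = p @ e # q \<and> M - {e} \<subseteq> set p \<and>
                 (\<forall>v\<in>S. \<forall>f\<in>set p. v \<notin> f)}"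
  then obtain p q where xsE: "xs \<in> permutations_of_set E" and pq: "xs = p @ e # q" "M - {e} \<subseteq> set p"
    and all: "\<forall>v\<in>S. \<forall>f\<in>set p. v \<notin> f" by auto
  have "xs \<in> Av E M e v" if "v \<in> S" for v
    unfolding Av_def using xsE pq all that by auto
  then show "xs \<in> (\<Inter>v\<in>S. Av E M e v)" by blast
qed

lemma filter_split:
  assumes "e \<in> D"
  shows "filter (\<lambda>x. x \<in> D) (p @ e # q) = filter (\<lambda>x. x \<in> D) p @ e # filter (\<lambda>x. x \<in> D) q"
  using assms by simp

lemma inter_set_eq:
  assumes EV: "\<forall>f\<in>E. f \<subseteq> V" and ME: "M \<subseteq> E"
    and match: "\<forall>v\<in>V. \<exists>!e. e \<in> M \<and> v \<in> e"
    and eM: "e \<in> M" and Se: "S \<subseteq> e"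
  defines "D \<equiv> M \<union> {f \<in> E. f \<inter> S \<noteq> {}}"
  shows "{xs \<in> permutations_of_set E. \<exists>p q. xs = p @ e # q \<and> M - {e} \<subseteq> set p \<and>
                 (\<forall>v\<in>S. \<forall>f\<in>set p. v \<notin> f)}
       = {xs \<in> permutations_of_set E. filter (\<lambda>x. x \<in> D) xs \<in> {zs. \<exists>b c. zs = b @ e # c \<and> set b = M - {e}}}"
proof (rule set_eqI, rule iffI)
  have eD: "e \<in> D" using eM D_def by simp
  fix xs
  assume "xs \<in> {xs \<in> permutations_of_set E. \<exists>p q. xs = p @ e # q \<and> M - {e} \<subseteq> set p \<and>
                 (\<forall>v\<in>S. \<forall>f\<in>set p. v \<notin> f)}"
  then obtain p q where xsE: "xs \<in> permutations_of_set E" and pq: "xs = p @ e # q" "M - {e} \<subseteq> set p"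
    and all: "\<forall>v\<in>S. \<forall>f\<in>set p. v \<notin> f" by auto
  have ep: "e \<notin> set p" using xsE pq(1) by (auto simp: permutations_of_set_def)
  have "set (filter (\<lambda>x. x \<in> D) p) = M - {e}"
  proof
    show "set (filter (\<lambda>x. x \<in> D) p) \<subseteq> M - {e}"
    proof
      fix f assume "f \<in> set (filter (\<lambda>x. x \<in> D) p)"
      then have f: "f \<in> set p" "f \<in> D" by auto
      have "f \<notin> {f \<in> E. f \<inter> S \<noteq> {}}"
      proof
        assume "f \<in> {f \<in> E. f \<inter> S \<noteq> {}}"
        then obtain v where "v \<in> S" "v \<in> f" by blast
        then show False using all f(1) by blast
      qed
      then have "f \<in> M" using f(2) D_def by blast
      moreover have "f \<noteq> e" using f(1) ep by blast
      ultimately show "f \<in> M - {e}" by blast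
    qed
  next
    show "M - {e} \<subseteq> set (filter (\<lambda>x. x \<in> D) p)"
      using pq(2) D_def by auto
  qed
  then have "filter (\<lambda>x. x \<in> D) xs \<in> {zs. \<exists>b c. zs = b @ e # c \<and> set b = M - {e}}"
    unfolding pq(1) filter_split[OF eD] by blast
  then show "xs \<in> {xs \<in> permutations_of_set E. filter (\<lambda>x. x \<in> D) xs \<in> {zs. \<exists>b c. zs = b @ e # c \<and> set b = M - {e}}}"
    using xsE by blast
next
  have eD: "e \<in> D" using eM D_def by simp
  fix xs
  assume "xs \<in> {xs \<in> permutations_of_set E. filter (\<lambda>x. x \<in> D) xs \<in> {zs. \<exists>b c. zs = b @ e # c \<and> set b = M - {e}}}"
  then obtain b c where xsE: "xs \<in> permutations_of_set E" and bc: "filter (\<lambda>x. x \<in> D) xs = b @ e # c" "set b = M - {e}"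
    by auto
  have sx: "set xs = E" "distinct xs" using xsE by (auto simp: permutations_of_set_def)
  have "e \<in> set xs" using sx eM ME by auto
  then obtain p q where pq: "xs = p @ e # q" by (meson split_list)
  have "e \<notin> set p" "e \<notin> set q" using sx(2) unfolding pq by auto
  then have ep: "e \<notin> set (filter (\<lambda>x. x \<in> D) p)" "e \<notin> set (filter (\<lambda>x. x \<in> D) q)"
    by auto
  have "filter (\<lambda>x. x \<in> D) p @ e # filter (\<lambda>x. x \<in> D) q = b @ e # c"
    using bc(1) unfolding pq filter_split[OF eD] .
  then have fb: "filter (\<lambda>x. x \<in> D) p = b" using append_Cons_eq_iff[OF ep(1) ep(2)] by blast
  have "set b \<subseteq> set p" unfolding fb[symmetric] by auto
  then have sub: "M - {e} \<subseteq> set p" using bc(2) by simp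
  have all: "\<forall>v\<in>S. \<forall>f\<in>set p. v \<notin> f"
  proof (intro ballI notI)
    fix v f assume vf: "v \<in> S" "f \<in> set p" "v \<in> f"
    have "f \<in> set xs" using vf(2) unfolding pq by simp
    then have "f \<in> E" using sx(1) by simp
    then have "f \<in> D" using vf D_def by blast
    then have "f \<in> set (filter (\<lambda>x. x \<in> D) p)" using vf(2) by simp
    then have fM: "f \<in> M - {e}" using fb bc(2) by simp
    have "e \<subseteq> V" using EV ME eM by blast
    then have "v \<in> V" using vf(1) Se by blast
    have "v \<in> e" using vf(1) Se by blast
    have ex1: "\<exists>!e. e \<in> M \<and> v \<in> e" using match \<open>v \<in> V\<close> by (rule bspec)
    obtain e0 where "\<forall>e'. e' \<in> M \<and> v \<in> e' \<longrightarrow> e' = e0" using ex1 by (elim ex1E) auto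
    then have "f = e0" "e = e0" using fM vf(3) eM \<open>v \<in> e\<close> by auto
    then show False using fM by simp
  qed
  show "xs \<in> {xs \<in> permutations_of_set E. \<exists>p q. xs = p @ e # q \<and> M - {e} \<subseteq> set p \<and>
                 (\<forall>v\<in>S. \<forall>f\<in>set p. v \<notin> f)}"
    using xsE pq sub all by auto
qed

lemma inter_count:
  assumes finE: "finite E" and EV: "\<forall>f\<in>E. f \<subseteq> V" and ME: "M \<subseteq> E"
    and match: "\<forall>v\<in>V. \<exists>!e. e \<in> M \<and> v \<in> e"
    and eM: "e \<in> M" and Se: "S \<subseteq> e" and Sne: "S \<noteq> {}"
  shows "real (card (\<Inter>v\<in>S. Av E M e v))
       = fact (card E) / (real (card M) * real ((card M + card {f \<in> E. f \<inter> S \<noteq> {}} - 1) choose card M))"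
proof -
  define T where "T = {f \<in> E. f \<inter> S \<noteq> {}}"
  define D where "D = M \<union> T"
  define P where "P = {zs. \<exists>b c. zs = b @ e # c \<and> set b = M - {e}}"
  have DE: "D \<subseteq> E" using ME D_def T_def by auto
  have finD: "finite D" using DE finE finite_subset by auto
  have finM: "finite M" using ME finE finite_subset by auto
  have finT: "finite T" using T_def finE by auto
  have eT: "e \<in> T" using T_def eM ME Se Sne by auto
  have MT: "M \<inter> T = {e}"
  proof
    show "{e} \<subseteq> M \<inter> T" using eM eT by simp
    show "M \<inter> T \<subseteq> {e}"
    proof
      fix f assume f: "f \<in> M \<inter> T"
      then obtain v where v: "v \<in> S" "v \<in> f" unfolding T_def by blast
      have "e \<subseteq> V" using EV ME eM by blast
      then have vV: "v \<in> V" using v(1) Se by blast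
      have ex1: "\<exists>!e. e \<in> M \<and> v \<in> e" using match vV by (rule bspec)
      obtain e0 where "\<forall>e'. e' \<in> M \<and> v \<in> e' \<longrightarrow> e' = e0" using ex1 by (elim ex1E) auto
      then have "f = e0" "e = e0" using f v eM Se by auto
      then show "f \<in> {e}" by simp
    qed
  qed
  have seteq: "(\<Inter>v\<in>S. Av E M e v) = {xs \<in> permutations_of_set (D \<union> (E - D)). filter (\<lambda>x. x \<in> D) xs \<in> P}"
  proof -
    have "D \<union> (E - D) = E" using DE by auto
    then show ?thesis
      unfolding Av_Inter[OF Sne] P_def D_def T_def
      using inter_set_eq[OF EV ME match eM Se] by simp
  qed
  have cf: "card {xs \<in> permutations_of_set (D \<union> (E - D)). filter (\<lambda>x. x \<in> D) xs \<in> P} * fact (card D)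
         = fact (card D + card (E - D)) * card (P \<inter> permutations_of_set D)"
    by (rule count_filter) (use finE finD in auto)
  have cED: "card D + card (E - D) = card E"
    using DE finE by (metis card_Diff_subset card_mono finD le_add_diff_inverse)
  have PD: "P \<inter> permutations_of_set D = {zs \<in> permutations_of_set D. \<exists>b c. zs = b @ e # c \<and> set b = M - {e}}"
    unfolding P_def by auto
  have cp: "card (P \<inter> permutations_of_set D) = fact (card (M - {e})) * fact (card D - card (M - {e}) - 1)"
    unfolding PD by (rule count_pattern) (use finD eM D_def in auto)
  define m where "m = card M"
  define t where "t = card T"
  have m1: "m \<ge> 1" using eM finM m_def by (metis One_nat_def Suc_leI card_gt_0_iff empty_iff)
  have t1: "t \<ge> 1" using eT finT t_def by (metis One_nat_def Suc_leI card_gt_0_iff empty_iff)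
  have cD: "card D = m + t - 1"
  proof -
    have "card D + card (M \<inter> T) = card M + card T"
      unfolding D_def by (rule card_Un_Int[OF finM finT, symmetric])
    then show ?thesis using MT m_def t_def by simp
  qed
  have cMe: "card (M - {e}) = m - 1" using eM finM m_def by simp
  have cD2: "card D - card (M - {e}) - 1 = t - 1" using cD cMe m1 t1 by simp
  have main: "card (\<Inter>v\<in>S. Av E M e v) * fact (m + t - 1) = fact (card E) * (fact (m - 1) * fact (t - 1))"
  proof -
    have "card (\<Inter>v\<in>S. Av E M e v) * fact (card D) = fact (card E) * card (P \<inter> permutations_of_set D)"
      using cf unfolding seteq[symmetric] cED .
    also have "\<dots> = fact (card E) * (fact (m - 1) * fact (t - 1))"
      unfolding cp using cD2 cMe by simp
    finally show ?thesis unfolding cD .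
  qed
  then have mainr: "real (card (\<Inter>v\<in>S. Av E M e v)) * fact (m + t - 1) = fact (card E) * (fact (m - 1) * fact (t - 1))"
    by (metis of_nat_fact of_nat_mult)
  have bin: "real ((m + t - 1) choose m) = fact (m + t - 1) / (fact m * fact (t - 1))"
  proof -
    have le: "m \<le> m + t - 1" using t1 by simp
    have d: "m + t - 1 - m = t - 1" using t1 by simp
    show ?thesis using binomial_fact[OF le, where 'a=real] unfolding d .
  qed
  have fm: "(fact m :: real) = real m * fact (m - 1)"
    using m1 by (metis Suc_diff_1 fact_Suc less_le_trans of_nat_fact zero_less_one)
  have pos: "(fact (m + t - 1) :: real) > 0" "(fact (m - 1) :: real) > 0" "(fact (t - 1) :: real) > 0" "real m > 0"
    using m1 by auto
  have "real (card (\<Inter>v\<in>S. Av E M e v)) = fact (card E) * (fact (m - 1) * fact (t - 1)) / fact (m + t - 1)"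
    using mainr pos by (simp add: field_simps)
  also have "\<dots> = fact (card E) / (real m * real ((m + t - 1) choose m))"
    unfolding bin fm using pos by (simp add: field_simps)
  finally show ?thesis unfolding m_def t_def T_def .
qed

lemma incl_excl_Ev:
  assumes finE: "finite E" and fine: "finite e"
  shows "real (card (Ev E M e)) = (\<Sum>S | S \<subseteq> e \<and> S \<noteq> {}. (-1) ^ (card S + 1) * real (card (\<Inter>v\<in>S. Av E M e v)))"
proof -
  let ?U = "permutations_of_set E"
  define f where "f = (\<lambda>X. real (card (X \<inter> ?U)))"
  have add: "f (A \<union> B) = f A + f B" if "disjnt A B" for A B
  proof -
    have "(A \<union> B) \<inter> ?U = (A \<inter> ?U) \<union> (B \<inter> ?U)" by auto
    moreover have "card ((A \<inter> ?U) \<union> (B \<inter> ?U)) = card (A \<inter> ?U) + card (B \<inter> ?U)"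
      by (rule card_Un_disjoint) (use that in \<open>auto simp: disjnt_def\<close>)
    ultimately show ?thesis unfolding f_def by simp
  qed
  have ie: "f (\<Union> (Av E M e ` e)) = (\<Sum>B | B \<subseteq> e \<and> B \<noteq> {}. (-1) ^ (card B + 1) * f (\<Inter> (Av E M e ` B)))"
    by (rule Incl_Excl_UN[OF add fine])
  have AU: "X \<subseteq> ?U \<Longrightarrow> f X = real (card X)" for X unfolding f_def by (simp add: Int_absorb2)
  have sub1: "\<Union> (Av E M e ` e) \<subseteq> ?U" unfolding Av_def by auto
  have sub2: "\<Inter> (Av E M e ` B) \<subseteq> ?U" if "B \<noteq> {}" for B unfolding Av_def using that by auto
  show ?thesis
    unfolding Ev_Un
    using ie AU[OF sub1] by (simp add: AU[OF sub2])
qed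

lemma group_by_card:
  fixes g :: "nat \<Rightarrow> real"
  assumes "finite e" "card e = r"
  shows "(\<Sum>S | S \<subseteq> e \<and> S \<noteq> {}. g (card S)) = (\<Sum>i=1..r. real (r choose i) * g i)"
proof -
  have fin: "finite {S. S \<subseteq> e \<and> S \<noteq> {}}" using assms by simp
  have img: "card ` {S. S \<subseteq> e \<and> S \<noteq> {}} \<subseteq> {1..r}"
  proof
    fix k assume "k \<in> card ` {S. S \<subseteq> e \<and> S \<noteq> {}}"
    then obtain S where "S \<subseteq> e" "S \<noteq> {}" "k = card S" by blast
    moreover have "finite S" using \<open>S \<subseteq> e\<close> assms(1) finite_subset by auto
    ultimately show "k \<in> {1..r}" using assms card_mono[OF assms(1)]
      by (metis One_nat_def Suc_leI atLeastAtMost_iff card_gt_0_iff)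
  qed
  have "(\<Sum>S | S \<subseteq> e \<and> S \<noteq> {}. g (card S))
      = (\<Sum>i\<in>{1..r}. \<Sum>S\<in>{S \<in> {S. S \<subseteq> e \<and> S \<noteq> {}}. card S = i}. g (card S))"
    by (rule sum.group[OF fin _ img, symmetric]) simp
  also have "\<dots> = (\<Sum>i\<in>{1..r}. real (r choose i) * g i)"
  proof (rule sum.cong[OF refl])
    fix i assume i: "i \<in> {1..r}"
    have "{S \<in> {S. S \<subseteq> e \<and> S \<noteq> {}}. card S = i} = {S. S \<subseteq> e \<and> card S = i}"
      using i by auto
    moreover have "card {S. S \<subseteq> e \<and> card S = i} = r choose i"
      using n_subsets[OF assms(1)] assms(2) by simp
    ultimately show "(\<Sum>S\<in>{S \<in> {S. S \<subseteq> e \<and> S \<noteq> {}}. card S = i}. g (card S)) = real (r choose i) * g i"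
      by simp
  qed
  finally show ?thesis .
qed

definition edg :: "nat \<Rightarrow> (nat \<Rightarrow> nat) \<Rightarrow> (nat \<times> nat) set" where
  "edg r h = (\<lambda>j. (j, h j)) ` {..<r}"

lemma mem_edg: "(j, w) \<in> edg r h \<longleftrightarrow> j < r \<and> w = h j"
  unfolding edg_def by auto

lemma edg_eq: "edg r h = edg r h' \<longleftrightarrow> (\<forall>j<r. h j = h' j)"
proof
  assume a: "edg r h = edg r h'"
  show "\<forall>j<r. h j = h' j"
  proof (intro allI impI)
    fix j assume "j < r"
    then have "(j, h j) \<in> edg r h" by (simp add: mem_edg)
    then have "(j, h j) \<in> edg r h'" using a by simp
    then show "h j = h' j" by (simp add: mem_edg)
  qed
next
  assume "\<forall>j<r. h j = h' j"
  then show "edg r h = edg r h'" unfolding edg_def by auto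
qed

lemma card_edg: "card (edg r h) = r"
proof -
  have "inj_on (\<lambda>j. (j, h j)) {..<r}" by (auto intro: inj_onI)
  then show ?thesis unfolding edg_def by (simp add: card_image)
qed

lemma transversal_eq:
  "transversal_edges r n = edg r ` PiE {..<r} (\<lambda>_. {..<n})"
proof (rule set_eqI, rule iffI)
  fix e assume "e \<in> transversal_edges r n"
  then have eV: "e \<subseteq> kpart_vertices r n" and c1: "\<forall>j<r. card {v. (j, v) \<in> e} = 1"
    unfolding transversal_edges_def by simp_all
  define h where "h = (\<lambda>j\<in>{..<r}. THE w. (j, w) \<in> e)"
  have hj: "(j, h j) \<in> e \<and> (\<forall>v. (j, v) \<in> e \<longrightarrow> v = h j)" if "j < r" for j
  proof -
    have "card {v. (j, v) \<in> e} = 1" using c1 that by simp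
    then obtain w where w: "{v. (j, v) \<in> e} = {w}" by (rule card_1_singletonE)
    then have "(THE w. (j, w) \<in> e) = w" by (intro the_equality) auto
    then have "h j = w" using that h_def by simp
    then show ?thesis using w by auto
  qed
  have "h \<in> PiE {..<r} (\<lambda>_. {..<n})"
  proof -
    have "h j < n" if "j < r" for j using hj[OF that] eV unfolding kpart_vertices_def by auto
    then show ?thesis unfolding h_def by (auto simp: PiE_iff)
  qed
  moreover have "e = edg r h"
  proof
    show "e \<subseteq> edg r h"
    proof
      fix x assume "x \<in> e"
      moreover obtain j v where "x = (j, v)" by (cases x)
      ultimately have "(j, v) \<in> e" by simp
      then have "j < r" using eV unfolding kpart_vertices_def by auto
      then show "x \<in> edg r h" using hj \<open>(j, v) \<in> e\<close> \<open>x = (j, v)\<close> mem_edg by metis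
    qed
    show "edg r h \<subseteq> e" unfolding edg_def using hj by auto
  qed
  ultimately show "e \<in> edg r ` PiE {..<r} (\<lambda>_. {..<n})" by blast
next
  fix e assume "e \<in> edg r ` PiE {..<r} (\<lambda>_. {..<n})"
  then obtain h where h: "h \<in> PiE {..<r} (\<lambda>_. {..<n})" "e = edg r h" by blast
  have "e \<subseteq> kpart_vertices r n"
    using h unfolding edg_def kpart_vertices_def by (auto simp: PiE_iff)
  moreover have "card e = r" using h card_edg by simp
  moreover have "card {v. (j, v) \<in> e} = 1" if "j < r" for j
  proof -
    have "{v. (j, v) \<in> e} = {h j}" using h(2) that mem_edg by auto
    then show ?thesis by simp
  qed
  ultimately show "e \<in> transversal_edges r n" unfolding transversal_edges_def by auto
qed

lemma inj_edg: "inj_on (edg r) (PiE {..<r} F)"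
proof (rule inj_onI)
  fix h h' assume h: "h \<in> PiE {..<r} F" and h': "h' \<in> PiE {..<r} F" and eq: "edg r h = edg r h'"
  have all: "\<forall>j<r. h j = h' j" using eq by (simp only: edg_eq)
  show "h = h'"
  proof (rule PiE_ext[OF h h'])
    fix i assume "i \<in> {..<r}"
    then show "h i = h' i" using all by simp
  qed
qed

lemma card_hit:
  assumes n1: "n \<ge> 1" and eE: "e \<in> transversal_edges r n" and Se: "S \<subseteq> e"
  shows "card {f \<in> transversal_edges r n. f \<inter> S \<noteq> {}} = n ^ r - (n - 1) ^ card S * n ^ (r - card S)"
proof -
  let ?P = "PiE {..<r} (\<lambda>_. {..<n}) :: (nat \<Rightarrow> nat) set"
  obtain h0 where h0: "h0 \<in> ?P" "e = edg r h0" using eE transversal_eq by blast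
  define J where "J = fst ` S"
  have SJ: "S = (\<lambda>j. (j, h0 j)) ` J"
  proof
    show "S \<subseteq> (\<lambda>j. (j, h0 j)) ` J"
    proof
      fix x assume "x \<in> S"
      then have "x \<in> edg r h0" using Se h0 by auto
      then obtain j where "j < r" "x = (j, h0 j)" unfolding edg_def by auto
      then show "x \<in> (\<lambda>j. (j, h0 j)) ` J" using \<open>x \<in> S\<close> J_def by force
    qed
    show "(\<lambda>j. (j, h0 j)) ` J \<subseteq> S"
    proof
      fix x assume "x \<in> (\<lambda>j. (j, h0 j)) ` J"
      then obtain y where y: "y \<in> S" "x = (fst y, h0 (fst y))" using J_def by auto
      then have "y \<in> edg r h0" using Se h0 by auto
      then have "y = (fst y, h0 (fst y))" unfolding edg_def by auto
      then show "x \<in> S" using y by simp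
    qed
  qed
  have Jr: "J \<subseteq> {..<r}"
  proof
    fix j assume "j \<in> J"
    then obtain y where "y \<in> S" "j = fst y" using J_def by auto
    then have "y \<in> edg r h0" using Se h0 by auto
    then show "j \<in> {..<r}" using \<open>j = fst y\<close> unfolding edg_def by auto
  qed
  have cJ: "card S = card J"
    unfolding SJ by (rule card_image) (auto intro: inj_onI)
  define F where "F = (\<lambda>j. if j \<in> J then {..<n} - {h0 j} else {..<n})"
  have miss: "{h \<in> ?P. edg r h \<inter> S = {}} = PiE {..<r} F"
  proof (rule set_eqI)
    fix h
    have "edg r h \<inter> S = {} \<longleftrightarrow> (\<forall>j\<in>J. h j \<noteq> h0 j)"
      unfolding SJ edg_def using Jr by auto
    then show "h \<in> {h \<in> ?P. edg r h \<inter> S = {}} \<longleftrightarrow> h \<in> PiE {..<r} F"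
      unfolding F_def using Jr by (auto simp: PiE_iff)
  qed
  have cF: "card (PiE {..<r} F) = (n - 1) ^ card J * n ^ (r - card J)"
  proof -
    have "card (PiE {..<r} F) = (\<Prod>j\<in>{..<r}. card (F j))" by (simp add: card_PiE)
    also have "\<dots> = (\<Prod>j\<in>{..<r}. if j \<in> J then n - 1 else n)"
    proof (rule prod.cong[OF refl])
      fix j assume "j \<in> {..<r}"
      have "h0 j < n" if "j \<in> J" using h0(1) Jr that by (auto simp: PiE_iff)
      then show "card (F j) = (if j \<in> J then n - 1 else n)" unfolding F_def by auto
    qed
    also have "\<dots> = (\<Prod>j\<in>{..<r} \<inter> J. n - 1) * (\<Prod>j\<in>{..<r} \<inter> - J. n)"
      using prod.If_cases[of "{..<r}" "\<lambda>j. j \<in> J" "\<lambda>_. n - 1" "\<lambda>_. n"] by simp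
    also have "\<dots> = (n - 1) ^ card J * n ^ (r - card J)"
    proof -
      have "{..<r} \<inter> J = J" using Jr by auto
      moreover have "card ({..<r} \<inter> - J) = r - card J"
      proof -
        have "{..<r} \<inter> - J = {..<r} - J" by auto
        then show ?thesis using Jr by (simp add: card_Diff_subset finite_subset)
      qed
      ultimately show ?thesis by simp
    qed
    finally show ?thesis .
  qed
  have cP: "card ?P = n ^ r" by (simp add: card_PiE)
  have E: "transversal_edges r n = edg r ` ?P" by (rule transversal_eq)
  have "{f \<in> transversal_edges r n. f \<inter> S \<noteq> {}} = edg r ` ?P - edg r ` {h \<in> ?P. edg r h \<inter> S = {}}"
    unfolding E by auto
  moreover have "card (edg r ` ?P - edg r ` {h \<in> ?P. edg r h \<inter> S = {}})
        = card (edg r ` ?P) - card (edg r ` {h \<in> ?P. edg r h \<inter> S = {}})"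
  proof (rule card_Diff_subset)
    have "finite {h \<in> ?P. edg r h \<inter> S = {}}" by (rule finite_subset[of _ ?P]) (auto intro: finite_PiE)
    then show "finite (edg r ` {h \<in> ?P. edg r h \<inter> S = {}})" by (rule finite_imageI)
    show "edg r ` {h \<in> ?P. edg r h \<inter> S = {}} \<subseteq> edg r ` ?P" by auto
  qed
  moreover have "card (edg r ` ?P) = n ^ r" using card_image[OF inj_edg] cP by simp
  moreover have "card (edg r ` {h \<in> ?P. edg r h \<inter> S = {}}) = (n - 1) ^ card J * n ^ (r - card J)"
    using card_image[OF inj_on_subset[OF inj_edg, of "{h \<in> ?P. edg r h \<inter> S = {}}"]] miss cF by auto
  ultimately show ?thesis using cJ by simp
qed

lemma edg_in_E:
  assumes "\<forall>j<r. h j < n"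
  shows "edg r h \<in> transversal_edges r n"
proof -
  have "restrict h {..<r} \<in> PiE {..<r} (\<lambda>_. {..<n})" using assms by auto
  moreover have "edg r (restrict h {..<r}) = edg r h" by (simp add: edg_eq)
  ultimately show ?thesis unfolding transversal_eq by (metis image_eqI)
qed

lemma E_edg:
  assumes "e \<in> transversal_edges r n"
  obtains h where "\<forall>j<r. h j < n" "e = edg r h"
proof -
  obtain h where "h \<in> PiE {..<r} (\<lambda>_. {..<n})" "e = edg r h" using assms unfolding transversal_eq by blast
  then show ?thesis using that by (auto simp: PiE_iff)
qed

definition hv :: "(nat \<Rightarrow> nat \<Rightarrow> nat) \<Rightarrow> nat \<Rightarrow> nat \<Rightarrow> nat" where
  "hv g v = (\<lambda>j. if j = 0 then v else g j v)"

definition Phi :: "nat \<Rightarrow> nat \<Rightarrow> (nat \<Rightarrow> nat \<Rightarrow> nat) \<Rightarrow> (nat \<times> nat) set set" where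
  "Phi r n g = (\<lambda>v. edg r (hv g v)) ` {..<n}"

definition PM :: "nat \<Rightarrow> nat \<Rightarrow> (nat \<Rightarrow> nat \<Rightarrow> nat) set" where
  "PM r n = PiE {1..<r} (\<lambda>_. {\<sigma>. \<sigma> permutes {..<n}})"

lemma PM_perm: "g \<in> PM r n \<Longrightarrow> 1 \<le> j \<Longrightarrow> j < r \<Longrightarrow> g j permutes {..<n}"
  unfolding PM_def by (auto simp: PiE_iff)

lemma hv_lt: "g \<in> PM r n \<Longrightarrow> v < n \<Longrightarrow> j < r \<Longrightarrow> hv g v j < n"
proof -
  assume a: "g \<in> PM r n" "v < n" "j < r"
  show "hv g v j < n"
  proof (cases "j = 0")
    case True then show ?thesis using a by (simp add: hv_def)
  next
    case False
    then have "g j permutes {..<n}" using a PM_perm by simp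
    then have "g j v \<in> {..<n}" using a(2) permutes_in_image[of "g j" "{..<n}" v] by simp
    then show ?thesis using False by (simp add: hv_def)
  qed
qed

lemma Phi_matching:
  assumes g: "g \<in> PM r n" and r: "r \<ge> 1"
  shows "Phi r n g \<in> matchings (kpart_vertices r n) (transversal_edges r n)"
proof -
  have sub: "Phi r n g \<subseteq> transversal_edges r n"
    unfolding Phi_def using hv_lt[OF g] by (auto intro!: edg_in_E)
  have "\<exists>!e. e \<in> Phi r n g \<and> x \<in> e" if x: "x \<in> kpart_vertices r n" for x
  proof -
    obtain j w where jw: "x = (j, w)" "j < r" "w < n" using x unfolding kpart_vertices_def by auto
    obtain v where v: "v < n" "hv g v j = w"
    proof (cases "j = 0")
      case True then show ?thesis using that jw by (simp add: hv_def)
    next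
      case False
      then have p: "g j permutes {..<n}" using jw g PM_perm by simp
      then have "inv (g j) w \<in> {..<n}" using jw(3) permutes_in_image[OF permutes_inv[OF p], of w] by simp
      moreover have "g j (inv (g j) w) = w" using p by (rule permutes_inverses)
      ultimately show ?thesis using that False by (simp add: hv_def)
    qed
    have ex: "edg r (hv g v) \<in> Phi r n g \<and> x \<in> edg r (hv g v)"
      unfolding Phi_def using v jw by (simp add: mem_edg)
    have uniq: "e = edg r (hv g v)" if e: "e \<in> Phi r n g" "x \<in> e" for e
    proof -
      obtain v' where v': "v' < n" "e = edg r (hv g v')" using e(1) unfolding Phi_def by auto
      have "hv g v' j = w" using e(2) v' jw by (simp add: mem_edg)
      have "v' = v"
      proof (cases "j = 0")
        case True then show ?thesis using \<open>hv g v' j = w\<close> v by (simp add: hv_def)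
      next
        case False
        then have p: "g j permutes {..<n}" using jw g PM_perm by simp
        have "g j v' = g j v" using \<open>hv g v' j = w\<close> v False by (simp add: hv_def)
        then show ?thesis using permutes_inj[OF p] by (simp add: inj_eq)
      qed
      then show ?thesis using v' by simp
    qed
    show ?thesis using ex uniq by blast
  qed
  then show ?thesis using sub unfolding matchings_def is_matching_def by blast
qed

lemma card_Phi:
  assumes r: "r \<ge> 1"
  shows "card (Phi r n g) = n"
proof -
  have "inj_on (\<lambda>v. edg r (hv g v)) {..<n}"
  proof (rule inj_onI)
    fix v v' assume "edg r (hv g v) = edg r (hv g v')"
    then have "hv g v 0 = hv g v' 0" using r by (simp add: edg_eq)
    then show "v = v'" by (simp add: hv_def)
  qed
  then show ?thesis unfolding Phi_def by (simp add: card_image)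
qed

lemma inj_Phi:
  assumes r: "r \<ge> 1"
  shows "inj_on (Phi r n) (PM r n)"
proof (rule inj_onI)
  fix g g' assume g: "g \<in> PM r n" and g': "g' \<in> PM r n" and eq: "Phi r n g = Phi r n g'"
  show "g = g'"
  proof (rule PiE_ext[OF g[unfolded PM_def] g'[unfolded PM_def]])
    fix j assume j: "j \<in> {1..<r}"
    have p: "g j permutes {..<n}" "g' j permutes {..<n}" using j g g' PM_perm by auto
    show "g j = g' j"
    proof
      fix v show "g j v = g' j v"
      proof (cases "v < n")
        case True
        then have "edg r (hv g v) \<in> Phi r n g'" using eq unfolding Phi_def by auto
        then obtain v' where v': "v' < n" "edg r (hv g v) = edg r (hv g' v')" unfolding Phi_def by auto
        then have all: "\<forall>i<r. hv g v i = hv g' v' i" by (simp add: edg_eq)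
        then have "v = v'" using r by (auto simp: hv_def)
        moreover have "hv g v j = hv g' v' j" using all j by auto
        ultimately show ?thesis using j by (simp add: hv_def)
      next
        case False
        then show ?thesis using p by (simp add: permutes_not_in)
      qed
    qed
  qed
qed

lemma matching_Phi:
  assumes r: "r \<ge> 1"
    and M: "M \<in> matchings (kpart_vertices r n) (transversal_edges r n)"
  shows "\<exists>g\<in>PM r n. M = Phi r n g"
proof -
  let ?V = "kpart_vertices r n" and ?E = "transversal_edges r n"
  have ME: "M \<subseteq> ?E" and match: "\<forall>x\<in>?V. \<exists>!e. e \<in> M \<and> x \<in> e"
    using M unfolding matchings_def is_matching_def by auto
  have uq: "e = e'" if "e \<in> M" "e' \<in> M" "x \<in> e" "x \<in> e'" "x \<in> ?V" for e e' x
  proof -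
    have ex1: "\<exists>!e. e \<in> M \<and> x \<in> e" using match that(5) by (rule bspec)
    obtain e0 where "\<forall>e'. e' \<in> M \<and> x \<in> e' \<longrightarrow> e' = e0" using ex1 by (elim ex1E) auto
    then show ?thesis using that by auto
  qed
  have "\<forall>v\<in>{..<n}. \<exists>H. (\<forall>j<r. H j < n) \<and> edg r H \<in> M \<and> H 0 = v"
  proof
    fix v assume v: "v \<in> {..<n}"
    then have "(0, v) \<in> ?V" using r unfolding kpart_vertices_def by auto
    then obtain e where e: "e \<in> M" "(0, v) \<in> e" using match by blast
    then obtain H where H: "\<forall>j<r. H j < n" "e = edg r H" using ME E_edg by blast
    then have "H 0 = v" using e(2) by (simp add: mem_edg)
    then show "\<exists>H. (\<forall>j<r. H j < n) \<and> edg r H \<in> M \<and> H 0 = v" using H e by blast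
  qed
  then obtain H where H: "\<forall>v\<in>{..<n}. (\<forall>j<r. H v j < n) \<and> edg r (H v) \<in> M \<and> H v 0 = v"
    by (rule bchoice[elim_format]) blast
  define g where "g = (\<lambda>j\<in>{1..<r}. \<lambda>v. if v < n then H v j else v)"
  have gperm: "g j permutes {..<n}" if j: "j \<in> {1..<r}" for j
  proof -
    have gj: "g j = (\<lambda>v. if v < n then H v j else v)" using j g_def by simp
    have img: "g j ` {..<n} \<subseteq> {..<n}" using H j gj by auto
    have inj: "inj_on (g j) {..<n}"
    proof (rule inj_onI)
      fix v v' assume vv: "v \<in> {..<n}" "v' \<in> {..<n}" "g j v = g j v'"
      then have "H v j = H v' j" using gj by simp
      then have x: "(j, H v j) \<in> edg r (H v)" "(j, H v j) \<in> edg r (H v')" using j by (auto simp: mem_edg)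
      have "(j, H v j) \<in> ?V" using H vv j unfolding kpart_vertices_def by auto
      then have "edg r (H v) = edg r (H v')" using uq x H vv by blast
      then have "H v 0 = H v' 0" using r by (simp add: edg_eq)
      then show "v = v'" using H vv by simp
    qed
    have "g j ` {..<n} = {..<n}" using endo_inj_surj[OF _ img inj] by simp
    then have "bij_betw (g j) {..<n} {..<n}" using inj by (simp add: bij_betw_def)
    moreover have "\<forall>x. x \<notin> {..<n} \<longrightarrow> g j x = x" using gj by simp
    ultimately show ?thesis using bij_imp_permutes by blast
  qed
  have gPM: "g \<in> PM r n" unfolding PM_def using gperm by (auto simp: g_def)
  have hvH: "edg r (hv g v) = edg r (H v)" if "v < n" for v
  proof -
    have "hv g v j = H v j" if "j < r" for j
      using that \<open>v < n\<close> H unfolding hv_def g_def by auto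
    then show ?thesis by (simp add: edg_eq)
  qed
  have "M = Phi r n g"
  proof
    show "Phi r n g \<subseteq> M" unfolding Phi_def using hvH H by auto
    show "M \<subseteq> Phi r n g"
    proof
      fix e assume e: "e \<in> M"
      then obtain h where h: "\<forall>j<r. h j < n" "e = edg r h" using ME E_edg by blast
      have v: "h 0 < n" using h r by simp
      have x: "(0, h 0) \<in> e" "(0, h 0) \<in> edg r (H (h 0))" using h r H v by (auto simp: mem_edg)
      have "(0, h 0) \<in> ?V" using v r unfolding kpart_vertices_def by auto
      then have "e = edg r (H (h 0))" using uq[OF e _ x(1) x(2)] H v by auto
      then show "e \<in> Phi r n g" unfolding Phi_def using hvH[OF v] v by auto
    qed
  qed
  then show ?thesis using gPM by blast
qed

lemma card_PM: "card (PM r n) = fact n ^ (r - 1)"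
proof -
  have "card {\<sigma>. \<sigma> permutes {..<n::nat}} = fact n" using card_permutations[of "{..<n}" n] by simp
  then show ?thesis unfolding PM_def by (simp add: card_PiE)
qed

lemma matchings_eq:
  assumes "r \<ge> 1"
  shows "matchings (kpart_vertices r n) (transversal_edges r n) = Phi r n ` PM r n"
  using matching_Phi[OF assms] Phi_matching[OF _ assms] by blast

lemma card_matchings:
  assumes "r \<ge> 1"
  shows "card (matchings (kpart_vertices r n) (transversal_edges r n)) = fact n ^ (r - 1)"
  unfolding matchings_eq[OF assms] card_image[OF inj_Phi[OF assms]] card_PM ..

lemma card_filter_sum:
  assumes "finite A"
  shows "real (card {x \<in> A. P x}) = (\<Sum>x\<in>A. if P x then 1 else 0)"
proof -
  have "(\<Sum>x\<in>A. if P x then 1 else (0::real)) = (\<Sum>x\<in>{x \<in> A. P x}. 1)"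
    using sum.inter_filter[OF assms, of "\<lambda>_. (1::real)" P] by simp
  then show ?thesis by simp
qed

theorem theorem2:
  fixes r n :: nat
  assumes "r \<ge> 2" and "n \<ge> 1"
  defines "V \<equiv> kpart_vertices r n"
  defines "E \<equiv> transversal_edges r n"
  shows "(\<Sum>xs\<in>permutations_of_set E. real (card (matchings V (G_omega V xs))))
           / real (card (permutations_of_set E))
         = real (fact n) ^ (r - 1) *
           (\<Sum>i=1..r. (-1) ^ (i - 1) * real (r choose i)
              / real ((n ^ r - (n - 1) ^ i * n ^ (r - i) + n - 1) choose n))"
proof -
  have r1: "r \<ge> 1" using assms(1) by simp
  have finE: "finite E" unfolding E_def transversal_eq by (auto intro: finite_PiE)
  have EV: "\<forall>f\<in>E. f \<subseteq> V" unfolding E_def V_def transversal_edges_def by auto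
  define MS where "MS = matchings V E"
  have finMS: "finite MS"
  proof (rule finite_subset[of _ "Pow E"])
    show "MS \<subseteq> Pow E" unfolding MS_def matchings_def is_matching_def by auto
    show "finite (Pow E)" using finE by simp
  qed
  have cMS: "card MS = fact n ^ (r - 1)" unfolding MS_def V_def E_def by (rule card_matchings[OF r1])
  define t where "t = (\<lambda>i::nat. n ^ r - (n - 1) ^ i * n ^ (r - i))"
  define g where "g = (\<lambda>i::nat. (-1) ^ (i + 1) * fact (card E) / (real n * real ((n + t i - 1) choose n)))"
  define R where "R = (\<Sum>i=1..r. real (r choose i) * g i)"
  have perM: "real (card {xs \<in> permutations_of_set E. M \<subseteq> G_omega V xs}) = real n * R" if M: "M \<in> MS" for M
  proof -
    have ME: "M \<subseteq> E" and match: "\<forall>v\<in>V. \<exists>!e. e \<in> M \<and> v \<in> e"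
      using M unfolding MS_def matchings_def is_matching_def by auto
    obtain g0 where g0: "g0 \<in> PM r n" "M = Phi r n g0"
      using matching_Phi[OF r1] M unfolding MS_def V_def E_def by blast
    have cM: "card M = n" using g0 card_Phi[OF r1] by simp
    then have Mne: "M \<noteq> {}" using assms(2) by auto
    have Ee: "real (card (Ev E M e)) = R" if eM: "e \<in> M" for e
    proof -
      have eE: "e \<in> E" using eM ME by auto
      obtain h where h: "\<forall>j<r. h j < n" "e = edg r h" using eE unfolding E_def by (rule E_edg)
      have ce: "card e = r" using h card_edg by simp
      have "card e > 0" using ce r1 by simp
      then have fine: "finite e" by (rule card_ge_0_finite)
      have "real (card (Ev E M e)) = (\<Sum>S | S \<subseteq> e \<and> S \<noteq> {}. (-1) ^ (card S + 1) * real (card (\<Inter>v\<in>S. Av E M e v)))"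
        by (rule incl_excl_Ev[OF finE fine])
      also have "\<dots> = (\<Sum>S | S \<subseteq> e \<and> S \<noteq> {}. g (card S))"
      proof (rule sum.cong[OF refl])
        fix S assume "S \<in> {S. S \<subseteq> e \<and> S \<noteq> {}}"
        then have Se: "S \<subseteq> e" and Sne: "S \<noteq> {}" by auto
        have "real (card (\<Inter>v\<in>S. Av E M e v))
           = fact (card E) / (real (card M) * real ((card M + card {f \<in> E. f \<inter> S \<noteq> {}} - 1) choose card M))"
          by (rule inter_count[OF finE EV ME match eM Se Sne])
        also have "\<dots> = fact (card E) / (real n * real ((n + t (card S) - 1) choose n))"
          using card_hit[OF assms(2) eE[unfolded E_def] Se] unfolding cM t_def E_def by simp
        finally show "(-1) ^ (card S + 1) * real (card (\<Inter>v\<in>S. Av E M e v)) = g (card S)"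
          unfolding g_def by simp
      qed
      also have "\<dots> = R" unfolding R_def by (rule group_by_card[OF fine ce])
      finally show ?thesis .
    qed
    have "card {xs \<in> permutations_of_set E. M \<subseteq> G_omega V xs} = (\<Sum>e\<in>M. card (Ev E M e))"
      by (rule card_success[OF finE EV ME Mne match])
    then have "real (card {xs \<in> permutations_of_set E. M \<subseteq> G_omega V xs}) = (\<Sum>e\<in>M. real (card (Ev E M e)))"
      by simp
    also have "\<dots> = (\<Sum>e\<in>M. R)" using Ee by (rule sum.cong[OF refl])
    also have "\<dots> = real n * R" using cM by simp
    finally show ?thesis .
  qed
  have mG: "matchings V (G_omega V xs) = {M \<in> MS. M \<subseteq> G_omega V xs}" if xs: "xs \<in> permutations_of_set E" for xs
  proof -
    have "G_omega V xs \<subseteq> E"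
      using xs unfolding G_omega_def permutations_of_set_def by (auto dest: in_set_takeD)
    then show ?thesis unfolding MS_def matchings_def is_matching_def by auto
  qed
  have "(\<Sum>xs\<in>permutations_of_set E. real (card (matchings V (G_omega V xs))))
      = (\<Sum>xs\<in>permutations_of_set E. \<Sum>M\<in>MS. if M \<subseteq> G_omega V xs then 1 else 0)"
    by (rule sum.cong[OF refl]) (simp add: mG card_filter_sum[OF finMS])
  also have "\<dots> = (\<Sum>M\<in>MS. \<Sum>xs\<in>permutations_of_set E. if M \<subseteq> G_omega V xs then 1 else 0)"
    by (rule sum.swap[of "\<lambda>xs M. if M \<subseteq> G_omega V xs then 1 else (0::real)" MS "permutations_of_set E"])
  also have "\<dots> = (\<Sum>M\<in>MS. real (card {xs \<in> permutations_of_set E. M \<subseteq> G_omega V xs}))"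
    by (rule sum.cong[OF refl], rule card_filter_sum[OF finite_permutations_of_set, symmetric])
  also have "\<dots> = (\<Sum>M\<in>MS. real n * R)" using perM by (rule sum.cong[OF refl])
  also have "\<dots> = fact n ^ (r - 1) * (real n * R)" using cMS by simp
  finally have sumeq: "(\<Sum>xs\<in>permutations_of_set E. real (card (matchings V (G_omega V xs))))
      = fact n ^ (r - 1) * (real n * R)" .
  have cP: "real (card (permutations_of_set E)) = fact (card E)" using finE by simp
  have fpos: "(fact (card E) :: real) > 0" by simp
  have npos: "real n > 0" using assms(2) by simp
  have X: "real n * R / fact (card E) = (\<Sum>i=1..r. (-1) ^ (i - 1) * real (r choose i)
              / real ((n ^ r - (n - 1) ^ i * n ^ (r - i) + n - 1) choose n))"
  proof -
    have X: "real n * R / fact (card E) = (\<Sum>i=1..r. real n * (real (r choose i) * g i) / fact (card E))"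
      unfolding R_def by (simp add: sum_distrib_left sum_divide_distrib)
    also have "\<dots> = (\<Sum>i=1..r. (-1) ^ (i - 1) * real (r choose i)
              / real ((n ^ r - (n - 1) ^ i * n ^ (r - i) + n - 1) choose n))"
    proof (rule sum.cong[OF refl])
      fix i assume i: "i \<in> {1..r}"
      have sg: "(-1::real) ^ (i + 1) = (-1) ^ (i - 1)"
      proof -
        obtain k where "i = Suc k" using i by (cases i) auto
        then show ?thesis by simp
      qed
      have nt: "n + t i - 1 = n ^ r - (n - 1) ^ i * n ^ (r - i) + n - 1" unfolding t_def by simp
      show "real n * (real (r choose i) * g i) / fact (card E) = (-1) ^ (i - 1) * real (r choose i)
              / real ((n ^ r - (n - 1) ^ i * n ^ (r - i) + n - 1) choose n)"
        unfolding g_def sg nt using fpos npos by (simp add: field_simps)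
    qed
    finally show ?thesis .
  qed
  have "fact n ^ (r - 1) * (real n * R) / fact (card E) = fact n ^ (r - 1) * (real n * R / fact (card E))"
    by (rule times_divide_eq_right[symmetric])
  also have "\<dots> = real (fact n) ^ (r - 1) * (\<Sum>i=1..r. (-1) ^ (i - 1) * real (r choose i)
              / real ((n ^ r - (n - 1) ^ i * n ^ (r - i) + n - 1) choose n))"
    unfolding X by simp
  finally show ?thesis unfolding sumeq cP .
qed

end
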